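(* For every bisection $\mathcal{S}=(S,\overline{S})$ and every stubborn vertex $x\in S$, it holds that $-a_x\le\mathrm{def}_{\mathcal{S}}(x)\le a_x$.
   Context: $G$ is a finite simple undirected graph with an odd number $n$ of vertices; $d(x)$ is the degree of $x$. Each vertex $x$ has stubbornness $\alpha_x\in(0,1)$ and $a_x=\lfloor\alpha_x/(1-\alpha_x)\rfloor$. A vertex $x$ is stubborn if $a_x\ge\min\{d(x),n-d(x)-1\}$. $W(A,B)$ is the number of edges with one endpoint in $A$ and the other in $B$. A bisection $(S,\overline{S})$ partitions the vertices with $|S|=\frac{n+1}{2}$, $|\overline{S}|=\frac{n-1}{2}$. For $x\in S$, $\mathrm{def}_{\mathcal{S}}(x)=W(x,S)-W(x,\overline{S})$. *)

theory Defs
  imports Complex_Main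
begin

definition simple_graph :: "'a set \<Rightarrow> ('a \<Rightarrow> 'a \<Rightarrow> bool) \<Rightarrow> bool" where
  "simple_graph V E \<longleftrightarrow> finite V \<and> (\<forall>u v. E u v \<longrightarrow> E v u) \<and> (\<forall>u. \<not> E u u)
     \<and> (\<forall>u v. E u v \<longrightarrow> u \<in> V \<and> v \<in> V)"

definition degree :: "'a set \<Rightarrow> ('a \<Rightarrow> 'a \<Rightarrow> bool) \<Rightarrow> 'a \<Rightarrow> nat" where
  "degree V E x = card {y \<in> V. E x y}"

definition W :: "('a \<Rightarrow> 'a \<Rightarrow> bool) \<Rightarrow> 'a set \<Rightarrow> 'a set \<Rightarrow> nat" where
  "W E A B = card {e. \<exists>u\<in>A. \<exists>v\<in>B. E u v \<and> e = {u, v}}"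

definition a_val :: "real \<Rightarrow> int" where
  "a_val \<alpha> = \<lfloor>\<alpha> / (1 - \<alpha>)\<rfloor>"

definition stubborn :: "'a set \<Rightarrow> ('a \<Rightarrow> 'a \<Rightarrow> bool) \<Rightarrow> ('a \<Rightarrow> real) \<Rightarrow> 'a \<Rightarrow> bool" where
  "stubborn V E \<alpha> x \<longleftrightarrow>
     a_val (\<alpha> x) \<ge> min (int (degree V E x)) (int (card V) - int (degree V E x) - 1)"

definition bisection :: "'a set \<Rightarrow> 'a set \<Rightarrow> bool" where
  "bisection V S \<longleftrightarrow> S \<subseteq> V \<and> card S = (card V + 1) div 2"

definition deficiency :: "'a set \<Rightarrow> ('a \<Rightarrow> 'a \<Rightarrow> bool) \<Rightarrow> 'a set \<Rightarrow> 'a \<Rightarrow> int" where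
  "deficiency V E S x = int (W E {x} S) - int (W E {x} (V - S))"

end

theory Submission
  imports Defs
begin

lemma W_single:
  "W E {x} A = card {y \<in> A. E x y}"
proof -
  have "{e. \<exists>u\<in>{x}. \<exists>v\<in>A. E u v \<and> e = {u, v}} = (\<lambda>y. {x,y}) ` {y \<in> A. E x y}"
    by auto
  moreover have "inj_on (\<lambda>y. {x,y}) {y \<in> A. E x y}"
    by (auto simp: inj_on_def doubleton_eq_iff)
  ultimately show ?thesis unfolding W_def by (simp add: card_image)
qed

theorem lemma5:
  fixes V :: "'a set" and E :: "'a \<Rightarrow> 'a \<Rightarrow> bool" and \<alpha> :: "'a \<Rightarrow> real"
    and S :: "'a set" and x :: 'a
  assumes "simple_graph V E"
    and "odd (card V)"
    and "\<forall>v\<in>V. 0 < \<alpha> v \<and> \<alpha> v < 1"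
    and "bisection V S"
    and "x \<in> S"
    and "stubborn V E \<alpha> x"
  shows "- a_val (\<alpha> x) \<le> deficiency V E S x \<and> deficiency V E S x \<le> a_val (\<alpha> x)"
proof -
  have fin: "finite V" and irr: "\<not> E x x" and inV: "\<And>u v. E u v \<Longrightarrow> v \<in> V"
    using assms(1) unfolding simple_graph_def by auto
  have SV: "S \<subseteq> V" and cS: "card S = (card V + 1) div 2"
    using assms(4) unfolding bisection_def by auto
  have finS: "finite S" using SV fin finite_subset by blast
  define s where "s = card {y \<in> S. E x y}"
  define t where "t = card {y \<in> V - S. E x y}"
  have d: "degree V E x = s + t"
  proof -
    have "{y \<in> V. E x y} = {y \<in> S. E x y} \<union> {y \<in> V - S. E x y}" using SV by auto
    moreover have "finite {y \<in> S. E x y}" "finite {y \<in> V - S. E x y}" using fin finS by auto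
    moreover have "{y \<in> S. E x y} \<inter> {y \<in> V - S. E x y} = {}" by blast
    ultimately show ?thesis unfolding degree_def s_def t_def
      by (simp only: card_Un_disjoint)
  qed
  have s1: "s \<le> card S - 1"
  proof -
    have "{y \<in> S. E x y} \<subseteq> S - {x}" using irr by auto
    hence "s \<le> card (S - {x})" unfolding s_def by (intro card_mono) (use finS in auto)
    thus ?thesis using assms(5) finS by simp
  qed
  have t1: "t \<le> card V - card S"
  proof -
    have "t \<le> card (V - S)" unfolding t_def by (intro card_mono) (use fin in auto)
    thus ?thesis using card_Diff_subset[OF finS SV] by simp
  qed
  have cSpos: "card S \<ge> 1" using assms(5) finS by (metis One_nat_def Suc_leI card_gt_0_iff empty_iff)
  have le: "card S \<le> card V" using card_mono[OF fin SV] .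
  have odd2: "2 * card S = card V + 1" using cS assms(2) by presburger
  have def: "deficiency V E S x = int s - int t"
    unfolding deficiency_def W_single s_def t_def by simp
  have st: "a_val (\<alpha> x) \<ge> min (int s + int t) (int (card V) - int s - int t - 1)"
    using assms(6) d unfolding stubborn_def by simp
  have s2: "int s \<le> int (card S) - 1" using s1 cSpos by linarith
  have t2: "int t \<le> int (card V) - int (card S)" using t1 le by linarith
  have o2: "2 * int (card S) = int (card V) + 1" using odd2 by linarith
  show ?thesis
  proof (cases "int s + int t \<le> int (card V) - int s - int t - 1")
    case True
    then have "a_val (\<alpha> x) \<ge> int s + int t" using st by simp
    then show ?thesis using def by linarith
  next
    case False
    then have "a_val (\<alpha> x) \<ge> int (card V) - int s - int t - 1" using st by simp
    then show ?thesis using def using s2 t2 o2 by linarith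
  qed
qed

end
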